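(* Let $F$ be a discrete time regulatory network on $[0,1]^d$ satisfying coordinatewise injectivity, let $(V,\mathcal A)$ be its underlying network, let $U\subset V$ be head-independent, and let $W:=V\setminus U$. Then $W$ is essential.
   Context: $V=\{1,\dots,d\}$; $K\in[0,1]^{d\times d}$ with $\sum_iK_{i,j}=1$ for each $j$; $s\in\{-1,0,1\}^{d\times d}$, $T\in[0,1]^{d\times d}$ with $s_{i,j}=0$ iff $K_{i,j}=0$ and $T_{i,j}=0$ iff $K_{i,j}=0$; $a\in[0,1]$; $H(x)=0$ for $x\le0$, $1$ otherwise; $F(x)_j=ax_j+(1-a)\sum_iK_{i,j}H(s_{i,j}(x_i-T_{i,j}))$. Underlying network: $\mathcal A=\{(i,j):K_{i,j}>0\}$. Coordinatewise injectivity: for each $j$, with $\mathcal F_j=\{x\mapsto ax+(1-a)\sum_i\epsilon_iK_{i,j}:\epsilon\in\{0,1\}^d\}$, distinct $f,f'\in\mathcal F_j$ have $f([0,1])\cap f'([0,1])=\emptyset$. Base partition: $\mathcal P_i$ is the set of nonempty level sets of $u\mapsto(H(s_{i,k}(u-T_{i,k})))_{k=1}^d$ on $[0,1]$, $\mathcal P=\{\prod_iI_i:I_i\in\mathcal P_i\}$; $\mathcal P^1=\mathcal P$, $\mathcal P^{t+1}=\{F^{-1}(\mathbf I)\cap\mathbf J\ne\emptyset:\mathbf I\in\mathcal P^t,\mathbf J\in\mathcal P\}$. $\mathcal Q^t=\{F^{t-1}(\mathbf I):\mathbf I\in\mathcal P^t\}$, $\mathcal Q_i^t=\{\Pi_i\mathbf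 J:\mathbf J\in\mathcal Q^t\}$. For $W'\subset V$, a $(W',t)$-specification is $\mathbf S=(S_i)_{i\in W'}$ with $S_i\in\mathcal Q_i^t$; $C(\mathbf S)=\{\mathbf J\in\mathcal Q^t:\Pi_i\mathbf J=S_i\ \forall i\in W'\}$ and $N(\mathbf S)=\#C(\mathbf S)$. $W$ is essential if there is $M\in\mathbb N$ with $N(\mathbf S)\le M$ for all $t\ge1$ and all $(W,t)$-specifications $\mathbf S$. $U$ is head-independent if (1) no arrow with tail in $U$ has head in $U$, and (2) distinct $i,i'\in U$ have $\{j:(i,j)\in\mathcal A\}\cap\{j:(i',j)\in\mathcal A\}=\emptyset$. *)

theory Defs
  imports Complex_Main "HOL-Library.FuncSet"
begin

text \<open>Vertices V = the finite type 'n (so d = CARD('n)); states are functions 'n => real.\<close>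

definition Hv :: "real \<Rightarrow> real" where
  "Hv x = (if x \<le> 0 then 0 else 1)"

definition cube :: "('n \<Rightarrow> real) set" where
  "cube = {x. \<forall>i. x i \<in> {0..1}}"

definition dtrn_map :: "real \<Rightarrow> ('n::finite \<Rightarrow> 'n \<Rightarrow> real) \<Rightarrow> ('n \<Rightarrow> 'n \<Rightarrow> int)
    \<Rightarrow> ('n \<Rightarrow> 'n \<Rightarrow> real) \<Rightarrow> ('n \<Rightarrow> real) \<Rightarrow> ('n \<Rightarrow> real)" where
  "dtrn_map a K s T x = (\<lambda>j. a * x j + (1 - a) * (\<Sum>i\<in>UNIV. K i j * Hv (of_int (s i j) * (x i - T i j))))"

definition is_dtrn :: "real \<Rightarrow> ('n::finite \<Rightarrow> 'n \<Rightarrow> real) \<Rightarrow> ('n \<Rightarrow> 'n \<Rightarrow> int)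
    \<Rightarrow> ('n \<Rightarrow> 'n \<Rightarrow> real) \<Rightarrow> bool" where
  "is_dtrn a K s T \<longleftrightarrow>
     a \<in> {0..1} \<and>
     (\<forall>i j. K i j \<in> {0..1}) \<and>
     (\<forall>j. (\<Sum>i\<in>UNIV. K i j) = 1) \<and>
     (\<forall>i j. s i j \<in> {-1, 0, 1}) \<and>
     (\<forall>i j. T i j \<in> {0..1}) \<and>
     (\<forall>i j. s i j = 0 \<longleftrightarrow> K i j = 0) \<and>
     (\<forall>i j. T i j = 0 \<longleftrightarrow> K i j = 0)"

definition arrows :: "('n \<Rightarrow> 'n \<Rightarrow> real) \<Rightarrow> ('n \<times> 'n) set" where
  "arrows K = {(i, j). K i j > 0}"

definition coord_map :: "real \<Rightarrow> ('n::finite \<Rightarrow> 'n \<Rightarrow> real) \<Rightarrow> 'n \<Rightarrow> ('n \<Rightarrow> bool) \<Rightarrow> real \<Rightarrow> real" where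
  "coord_map a K j eps = (\<lambda>x. a * x + (1 - a) * (\<Sum>i\<in>UNIV. (if eps i then 1 else 0) * K i j))"

definition coordinatewise_injective :: "real \<Rightarrow> ('n::finite \<Rightarrow> 'n \<Rightarrow> real) \<Rightarrow> bool" where
  "coordinatewise_injective a K \<longleftrightarrow>
     (\<forall>j eps eps'. coord_map a K j eps \<noteq> coord_map a K j eps' \<longrightarrow>
        coord_map a K j eps ` {0..1} \<inter> coord_map a K j eps' ` {0..1} = {})"

definition sig :: "('n \<Rightarrow> 'n \<Rightarrow> int) \<Rightarrow> ('n \<Rightarrow> 'n \<Rightarrow> real) \<Rightarrow> 'n \<Rightarrow> real \<Rightarrow> ('n \<Rightarrow> real)" where
  "sig s T i u = (\<lambda>k. Hv (of_int (s i k) * (u - T i k)))"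

definition base_part_i :: "('n \<Rightarrow> 'n \<Rightarrow> int) \<Rightarrow> ('n \<Rightarrow> 'n \<Rightarrow> real) \<Rightarrow> 'n \<Rightarrow> real set set" where
  "base_part_i s T i = {{u \<in> {0..1}. sig s T i u = sig s T i v} | v. v \<in> {0..1}}"

definition base_part :: "('n \<Rightarrow> 'n \<Rightarrow> int) \<Rightarrow> ('n \<Rightarrow> 'n \<Rightarrow> real) \<Rightarrow> ('n \<Rightarrow> real) set set" where
  "base_part s T = {Pi UNIV I | I. \<forall>i. I i \<in> base_part_i s T i}"

text \<open>part a K s T t = P^t for t >= 1 (P^0 is unused and set to {}).\<close>
fun part :: "real \<Rightarrow> ('n::finite \<Rightarrow> 'n \<Rightarrow> real) \<Rightarrow> ('n \<Rightarrow> 'n \<Rightarrow> int)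
    \<Rightarrow> ('n \<Rightarrow> 'n \<Rightarrow> real) \<Rightarrow> nat \<Rightarrow> ('n \<Rightarrow> real) set set" where
  "part a K s T 0 = {}"
| "part a K s T (Suc 0) = base_part s T"
| "part a K s T (Suc (Suc t)) =
     {C. \<exists>I\<in>part a K s T (Suc t). \<exists>J\<in>base_part s T.
          C = (dtrn_map a K s T -` I) \<inter> J \<and> C \<noteq> {}}"

definition Qpart :: "real \<Rightarrow> ('n::finite \<Rightarrow> 'n \<Rightarrow> real) \<Rightarrow> ('n \<Rightarrow> 'n \<Rightarrow> int)
    \<Rightarrow> ('n \<Rightarrow> 'n \<Rightarrow> real) \<Rightarrow> nat \<Rightarrow> ('n \<Rightarrow> real) set set" where
  "Qpart a K s T t = (\<lambda>I. (dtrn_map a K s T ^^ (t - 1)) ` I) ` part a K s T t"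

definition proj :: "'n \<Rightarrow> ('n \<Rightarrow> real) set \<Rightarrow> real set" where
  "proj i J = (\<lambda>x. x i) ` J"

definition Qpart_i :: "real \<Rightarrow> ('n::finite \<Rightarrow> 'n \<Rightarrow> real) \<Rightarrow> ('n \<Rightarrow> 'n \<Rightarrow> int)
    \<Rightarrow> ('n \<Rightarrow> 'n \<Rightarrow> real) \<Rightarrow> nat \<Rightarrow> 'n \<Rightarrow> real set set" where
  "Qpart_i a K s T t i = proj i ` Qpart a K s T t"

definition is_spec :: "real \<Rightarrow> ('n::finite \<Rightarrow> 'n \<Rightarrow> real) \<Rightarrow> ('n \<Rightarrow> 'n \<Rightarrow> int)
    \<Rightarrow> ('n \<Rightarrow> 'n \<Rightarrow> real) \<Rightarrow> 'n set \<Rightarrow> nat \<Rightarrow> ('n \<Rightarrow> real set) \<Rightarrow> bool" where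
  "is_spec a K s T W t S \<longleftrightarrow> (\<forall>i\<in>W. S i \<in> Qpart_i a K s T t i)"

definition spec_cells :: "real \<Rightarrow> ('n::finite \<Rightarrow> 'n \<Rightarrow> real) \<Rightarrow> ('n \<Rightarrow> 'n \<Rightarrow> int)
    \<Rightarrow> ('n \<Rightarrow> 'n \<Rightarrow> real) \<Rightarrow> 'n set \<Rightarrow> nat \<Rightarrow> ('n \<Rightarrow> real set) \<Rightarrow> ('n \<Rightarrow> real) set set" where
  "spec_cells a K s T W t S = {J \<in> Qpart a K s T t. \<forall>i\<in>W. proj i J = S i}"

definition essential :: "real \<Rightarrow> ('n::finite \<Rightarrow> 'n \<Rightarrow> real) \<Rightarrow> ('n \<Rightarrow> 'n \<Rightarrow> int)
    \<Rightarrow> ('n \<Rightarrow> 'n \<Rightarrow> real) \<Rightarrow> 'n set \<Rightarrow> bool" where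
  "essential a K s T W \<longleftrightarrow>
     (\<exists>M::nat. \<forall>t\<ge>1. \<forall>S. is_spec a K s T W t S \<longrightarrow>
        finite (spec_cells a K s T W t S) \<and> card (spec_cells a K s T W t S) \<le> M)"

definition head_independent :: "('n \<Rightarrow> 'n \<Rightarrow> real) \<Rightarrow> 'n set \<Rightarrow> bool" where
  "head_independent K U \<longleftrightarrow>
     (\<forall>i\<in>U. \<forall>j. (i, j) \<in> arrows K \<longrightarrow> j \<notin> U) \<and>
     (\<forall>i\<in>U. \<forall>i'\<in>U. i \<noteq> i' \<longrightarrow> {j. (i, j) \<in> arrows K} \<inter> {j. (i', j) \<in> arrows K} = {})"

end

theory Submission
  imports Defs
begin
definition sigall :: "('n \<Rightarrow> 'n \<Rightarrow> int) \<Rightarrow> ('n \<Rightarrow> 'n \<Rightarrow> real) \<Rightarrow> ('n \<Rightarrow> real) \<Rightarrow> 'n \<Rightarrow> 'n \<Rightarrow> real" where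
  "sigall s T y = (\<lambda>i. sig s T i (y i))"
definition itin where
  "itin a K s T x k = sigall s T ((dtrn_map a K s T ^^ k) x)"
definition Gs :: "('n::finite \<Rightarrow> 'n \<Rightarrow> real) \<Rightarrow> ('n \<Rightarrow> 'n \<Rightarrow> real) \<Rightarrow> 'n \<Rightarrow> real" where
  "Gs K \<sigma> = (\<lambda>j. \<Sum>i\<in>UNIV. K i j * \<sigma> i j)"
definition mixv :: "'n set \<Rightarrow> ('n \<Rightarrow> real) \<Rightarrow> ('n \<Rightarrow> real) \<Rightarrow> 'n \<Rightarrow> real" where
  "mixv A x x' = (\<lambda>i. if i \<in> A then x i else x' i)"
definition Sig01 :: "('n \<Rightarrow> 'n \<Rightarrow> real) set" where
  "Sig01 = {\<sigma>. \<forall>i j. \<sigma> i j \<in> {0,1}}"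

lemma Hv01: "Hv x \<in> {0,1}" by (simp add: Hv_def)

lemma sigall01: "sigall s T y \<in> Sig01"
  by (simp add: Sig01_def sigall_def sig_def Hv_def)

lemma finite_Sig01: "finite (Sig01 :: ('n::finite \<Rightarrow> 'n \<Rightarrow> real) set)"
proof -
  have "Sig01 \<subseteq> (\<lambda>f::'n\<times>'n \<Rightarrow> bool. \<lambda>i j. if f (i,j) then 1 else 0) ` UNIV"
  proof
    fix \<sigma> :: "'n \<Rightarrow> 'n \<Rightarrow> real" assume "\<sigma> \<in> Sig01"
    then have "\<sigma> = (\<lambda>i j. if (\<lambda>p. \<sigma> (fst p) (snd p) = 1) (i,j) then 1 else 0)"
      by (auto simp: Sig01_def fun_eq_iff)
    then show "\<sigma> \<in> (\<lambda>f::'n\<times>'n \<Rightarrow> bool. \<lambda>i j. if f (i,j) then 1 else 0) ` UNIV"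
      by (intro image_eqI[where x="\<lambda>p. \<sigma> (fst p) (snd p) = 1"]) simp_all
  qed
  then show ?thesis by (rule finite_subset) simp
qed

lemma F_eq: "dtrn_map a K s T x = (\<lambda>j. a * x j + (1 - a) * Gs K (sigall s T x) j)"
  by (simp add: dtrn_map_def Gs_def sigall_def sig_def)

lemma F_cube:
  assumes "is_dtrn a K s T" "x \<in> cube"
  shows "dtrn_map a K s T x \<in> cube"
proof -
  have a: "0 \<le> a" "a \<le> 1" using assms(1) by (auto simp: is_dtrn_def)
  { fix j
    have K0: "\<And>i. 0 \<le> K i j" and K1: "(\<Sum>i\<in>UNIV. K i j) = 1" using assms(1) by (auto simp: is_dtrn_def)
    have s0: "0 \<le> (\<Sum>i\<in>UNIV. K i j * Hv (of_int (s i j) * (x i - T i j)))"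
      by (intro sum_nonneg) (simp add: K0 Hv_def)
    have s1: "(\<Sum>i\<in>UNIV. K i j * Hv (of_int (s i j) * (x i - T i j))) \<le> (\<Sum>i\<in>UNIV. K i j)"
      by (intro sum_mono) (simp add: K0 Hv_def)
    have x: "0 \<le> x j" "x j \<le> 1" using assms(2) by (auto simp: cube_def)
    let ?S = "(\<Sum>i\<in>UNIV. K i j * Hv (of_int (s i j) * (x i - T i j)))"
    have "0 \<le> a * x j + (1 - a) * ?S" using a x s0 by simp
    moreover have "a * x j + (1 - a) * ?S \<le> a * 1 + (1 - a) * 1"
      using a x s1 K1 by (intro add_mono mult_left_mono) auto
    ultimately have "dtrn_map a K s T x j \<in> {0..1}" by (simp add: dtrn_map_def)
  }
  then show ?thesis by (simp add: cube_def)
qed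

lemma Fpow_cube:
  assumes "is_dtrn a K s T" "x \<in> cube"
  shows "(dtrn_map a K s T ^^ n) x \<in> cube"
  by (induction n) (auto simp: F_cube[OF assms(1)] assms(2))

lemma itin_Suc: "itin a K s T (dtrn_map a K s T x) k = itin a K s T x (Suc k)"
  by (simp add: itin_def funpow_Suc_right del: funpow.simps)

lemma base_char:
  assumes "C \<in> base_part s T"
  shows "C \<noteq> {} \<and> C \<subseteq> cube \<and> (\<forall>x\<in>C. \<forall>x'. x' \<in> C \<longleftrightarrow> x' \<in> cube \<and> sigall s T x' = sigall s T x)"
proof -
  obtain I where C: "C = Pi UNIV I" and I: "\<forall>i. I i \<in> base_part_i s T i"
    using assms by (auto simp: base_part_def)
  have "\<forall>i. \<exists>v. v \<in> {0..1} \<and> I i = {u \<in> {0..1}. sig s T i u = sig s T i v}"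
    using I by (auto simp: base_part_i_def)
  then obtain v where v: "\<And>i. v i \<in> {0..1}" "\<And>i. I i = {u \<in> {0..1}. sig s T i u = sig s T i (v i)}"
    by metis
  have mem: "\<And>x. x \<in> C \<longleftrightarrow> x \<in> cube \<and> sigall s T x = sigall s T v"
    unfolding C Pi_def using v(2) by (auto simp: cube_def sigall_def dest: fun_cong)
  have "v \<in> C" using v by (simp add: mem cube_def)
  then show ?thesis using mem by auto
qed

lemma part_char:
  assumes "is_dtrn a K s T"
  shows "C \<in> part a K s T (Suc t) \<Longrightarrow> C \<noteq> {} \<and> C \<subseteq> cube \<and>
     (\<forall>x\<in>C. \<forall>x'. x' \<in> C \<longleftrightarrow> x' \<in> cube \<and> (\<forall>k<Suc t. itin a K s T x' k = itin a K s T x k))"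
proof (induction t arbitrary: C)
  case 0
  then show ?case using base_char[of C s T] by (simp add: itin_def)
next
  case (Suc t)
  let ?F = "dtrn_map a K s T"
  from Suc.prems obtain I J where I: "I \<in> part a K s T (Suc t)" and J: "J \<in> base_part s T"
    and C: "C = ?F -` I \<inter> J" and ne: "C \<noteq> {}" by auto
  note IH = Suc.IH[OF I]
  note BJ = base_char[OF J]
  have sub: "C \<subseteq> cube" using C BJ by blast
  have "\<forall>x\<in>C. \<forall>x'. x' \<in> C \<longleftrightarrow> x' \<in> cube \<and> (\<forall>k<Suc (Suc t). itin a K s T x' k = itin a K s T x k)"
  proof (intro ballI allI)
    fix x x' assume x: "x \<in> C"
    have xJ: "x \<in> J" and FxI: "?F x \<in> I" using x C by auto
    have "x' \<in> C \<longleftrightarrow> x' \<in> J \<and> ?F x' \<in> I" using C by auto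
    also have "\<dots> \<longleftrightarrow> x' \<in> cube \<and> itin a K s T x' 0 = itin a K s T x 0 \<and> ?F x' \<in> I"
      using BJ xJ by (auto simp: itin_def)
    also have "\<dots> \<longleftrightarrow> x' \<in> cube \<and> itin a K s T x' 0 = itin a K s T x 0 \<and>
        (\<forall>k<Suc t. itin a K s T x' (Suc k) = itin a K s T x (Suc k))"
      using IH FxI F_cube[OF assms] by (auto simp: itin_Suc)
    also have "\<dots> \<longleftrightarrow> x' \<in> cube \<and> (\<forall>k<Suc (Suc t). itin a K s T x' k = itin a K s T x k)"
      by (metis less_Suc_eq_0_disj Suc_less_eq zero_less_Suc)
    finally show "x' \<in> C \<longleftrightarrow> x' \<in> cube \<and> (\<forall>k<Suc (Suc t). itin a K s T x' k = itin a K s T x k)" .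
  qed
  then show ?case using ne sub by blast
qed

lemma sigall_mix: "sigall s T x = sigall s T x' \<Longrightarrow> sigall s T (mixv A x x') = sigall s T x"
  by (auto simp: sigall_def mixv_def fun_eq_iff dest: fun_cong)

lemma F_mix: "sigall s T x = sigall s T x' \<Longrightarrow>
   dtrn_map a K s T (mixv A x x') = mixv A (dtrn_map a K s T x) (dtrn_map a K s T x')"
  by (simp add: F_eq sigall_mix) (auto simp: mixv_def fun_eq_iff)

lemma Fpow_mix: "(\<forall>k<n. itin a K s T x k = itin a K s T x' k) \<Longrightarrow>
   (dtrn_map a K s T ^^ n) (mixv A x x') = mixv A ((dtrn_map a K s T ^^ n) x) ((dtrn_map a K s T ^^ n) x')"
proof (induction n arbitrary: x x')
  case 0 then show ?case by simp
next
  case (Suc n)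
  have s0: "sigall s T x = sigall s T x'" using Suc.prems[rule_format, of 0] by (simp add: itin_def)
  have "\<forall>k<n. itin a K s T (dtrn_map a K s T x) k = itin a K s T (dtrn_map a K s T x') k"
    using Suc.prems by (simp add: itin_Suc)
  note IH = Suc.IH[OF this]
  show ?case by (simp add: funpow_Suc_right F_mix[OF s0] IH del: funpow.simps)
qed

lemma mix_cube: "x \<in> cube \<Longrightarrow> x' \<in> cube \<Longrightarrow> mixv A x x' \<in> cube"
  by (auto simp: cube_def mixv_def)

lemma Qpart_mix:
  assumes "is_dtrn a K s T" "t \<ge> 1" "J \<in> Qpart a K s T t" "y \<in> J" "y' \<in> J"
  shows "mixv A y y' \<in> J"
proof -
  let ?F = "dtrn_map a K s T"
  obtain t' where t: "t = Suc t'" using assms(2) by (cases t) auto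
  obtain C where C: "C \<in> part a K s T t" and J: "J = (?F ^^ t') ` C"
    using assms(3) t by (auto simp: Qpart_def)
  obtain x x' where x: "x \<in> C" "x' \<in> C" and y: "y = (?F ^^ t') x" "y' = (?F ^^ t') x'"
    using assms(4,5) J by auto
  note PC = part_char[OF assms(1), of C t'] 
  have eq: "\<forall>k<Suc t'. itin a K s T x' k = itin a K s T x k" and cx: "x \<in> cube" "x' \<in> cube"
    using PC C x t by auto
  have "mixv A x x' \<in> C"
  proof -
    have "\<forall>k<Suc t'. itin a K s T (mixv A x x') k = itin a K s T x k"
    proof (intro allI impI)
      fix k assume "k < Suc t'"
      then have "\<forall>k'<k. itin a K s T x k' = itin a K s T x' k'" using eq by auto
      from Fpow_mix[OF this, of A] have "(?F ^^ k) (mixv A x x') = mixv A ((?F ^^ k) x) ((?F ^^ k) x')" .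
      moreover have "itin a K s T x k = itin a K s T x' k" using eq \<open>k < Suc t'\<close> by auto
      ultimately show "itin a K s T (mixv A x x') k = itin a K s T x k"
        by (simp add: itin_def sigall_mix)
    qed
    then show ?thesis using PC C x t mix_cube[OF cx] by auto
  qed
  moreover have "(?F ^^ t') (mixv A x x') = mixv A y y'"
    using Fpow_mix[of t' a K s T x x' A] eq y by auto
  ultimately show ?thesis using J by force
qed

lemma mix_product:
  assumes ne: "J \<noteq> {}" and mix: "\<And>y y' A. y \<in> J \<Longrightarrow> y' \<in> J \<Longrightarrow> mixv A y y' \<in> J"
    and f: "\<And>i. f i \<in> proj i J"
  shows "(f :: 'n::finite \<Rightarrow> real) \<in> J"
proof -
  have "finite (B :: 'n set) \<Longrightarrow> \<exists>z\<in>J. \<forall>i\<in>B. z i = f i" for B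
  proof (induction B rule: finite_induct)
    case empty then show ?case using ne by auto
  next
    case (insert b B)
    then obtain z where z: "z \<in> J" "\<forall>i\<in>B. z i = f i" by auto
    obtain z' where z': "z' \<in> J" "z' b = f b" using f[of b] by (auto simp: proj_def)
    have "mixv {b} z' z \<in> J" using mix z z' by auto
    moreover have "\<forall>i\<in>insert b B. mixv {b} z' z i = f i" using z z' by (auto simp: mixv_def)
    ultimately show ?case by blast
  qed
  from this[of UNIV] obtain z where "z \<in> J" "\<forall>i. z i = f i" by auto
  moreover then have "z = f" by (simp add: fun_eq_iff)
  ultimately show ?thesis by simp
qed

lemma one_step_coord:
  assumes d: "is_dtrn a K s T" and ci: "coordinatewise_injective a K" and a: "0 < a" "a < 1"
    and z: "z \<in> cube" "z' \<in> cube"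
    and eqj: "dtrn_map a K s T z j = dtrn_map a K s T z' j"
  shows "z j = z' j \<and> Gs K (sigall s T z) j = Gs K (sigall s T z') j"
proof -
  define e where "e = (\<lambda>i. sigall s T z i j = 1)"
  define e' where "e' = (\<lambda>i. sigall s T z' i j = 1)"
  have sv: "\<And>y i. sigall s T y i j = (if sigall s T y i j = 1 then 1 else 0)"
    by (simp add: sigall_def sig_def Hv_def)
  have G1: "Gs K (sigall s T z) j = (\<Sum>i\<in>UNIV. (if e i then 1 else 0) * K i j)"
    unfolding Gs_def e_def by (subst sv) (simp add: mult.commute)
  have G2: "Gs K (sigall s T z') j = (\<Sum>i\<in>UNIV. (if e' i then 1 else 0) * K i j)"
    unfolding Gs_def e'_def by (subst sv) (simp add: mult.commute)
  have c1: "dtrn_map a K s T z j = coord_map a K j e (z j)"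
    by (simp add: F_eq G1 coord_map_def)
  have c2: "dtrn_map a K s T z' j = coord_map a K j e' (z' j)"
    by (simp add: F_eq G2 coord_map_def)
  have zj: "z j \<in> {0..1}" "z' j \<in> {0..1}" using z by (auto simp: cube_def)
  have "coord_map a K j e ` {0..1} \<inter> coord_map a K j e' ` {0..1} \<noteq> {}"
    using c1 c2 eqj zj by (metis disjoint_iff imageI)
  then have "coord_map a K j e = coord_map a K j e'" using ci unfolding coordinatewise_injective_def by blast
  then have "coord_map a K j e 0 = coord_map a K j e' 0" by simp
  then have "(1 - a) * Gs K (sigall s T z) j = (1 - a) * Gs K (sigall s T z') j"
    by (simp add: coord_map_def G1 G2)
  then have G: "Gs K (sigall s T z) j = Gs K (sigall s T z') j" using a by simp
  then have "a * z j = a * z' j" using eqj by (simp add: F_eq)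
  then show ?thesis using G a by simp
qed

lemma one_step:
  assumes d: "is_dtrn a K s T" and ci: "coordinatewise_injective a K" and a: "0 < a" "a < 1"
    and hi: "head_independent K U"
    and z: "z \<in> cube" "z' \<in> cube"
    and eqW: "\<forall>w\<in>UNIV - U. dtrn_map a K s T z w = dtrn_map a K s T z' w"
  shows "(\<forall>w\<in>UNIV - U. z w = z' w) \<and> sigall s T z = sigall s T z'"
proof -
  note OS = one_step_coord[OF d ci a z]
  have zW: "\<forall>w\<in>UNIV - U. z w = z' w" using OS eqW by blast
  have sW: "\<And>i. i \<notin> U \<Longrightarrow> sigall s T z i = sigall s T z' i" using zW by (simp add: sigall_def)
  have K0: "\<And>i j. 0 \<le> K i j" and sK: "\<And>i j. s i j = 0 \<longleftrightarrow> K i j = 0" using d by (auto simp: is_dtrn_def)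
  have "sigall s T z u j = sigall s T z' u j" if u: "u \<in> U" for u j
  proof (cases "K u j = 0")
    case True
    then have "s u j = 0" using sK by simp
    then show ?thesis by (simp add: sigall_def sig_def Hv_def)
  next
    case False
    then have arr: "(u, j) \<in> arrows K" using K0[of u j] by (simp add: arrows_def)
    then have jW: "j \<notin> U" using hi u by (auto simp: head_independent_def)
    have G: "Gs K (sigall s T z) j = Gs K (sigall s T z') j" using OS eqW jW by blast
    have other: "K i j * sigall s T z i j = K i j * sigall s T z' i j" if "i \<noteq> u" for i
    proof (cases "i \<in> U")
      case True
      have "(i, j) \<notin> arrows K"
      proof
        assume "(i, j) \<in> arrows K"
        then have "j \<in> {j. (u, j) \<in> arrows K} \<inter> {j. (i, j) \<in> arrows K}" using arr by simp
        moreover have "{j. (u, j) \<in> arrows K} \<inter> {j. (i, j) \<in> arrows K} = {}"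
          using hi u True \<open>i \<noteq> u\<close> unfolding head_independent_def by metis
        ultimately show False by simp
      qed
      then have "K i j = 0" using K0[of i j] by (simp add: arrows_def)
      then show ?thesis by simp
    next
      case False then show ?thesis using sW by simp
    qed
    have "Gs K (sigall s T z) j = K u j * sigall s T z u j + (\<Sum>i\<in>UNIV - {u}. K i j * sigall s T z i j)"
      unfolding Gs_def by (simp add: sum.remove[of UNIV u])
    moreover have "Gs K (sigall s T z') j = K u j * sigall s T z' u j + (\<Sum>i\<in>UNIV - {u}. K i j * sigall s T z' i j)"
      unfolding Gs_def by (simp add: sum.remove[of UNIV u])
    moreover have "(\<Sum>i\<in>UNIV - {u}. K i j * sigall s T z i j) = (\<Sum>i\<in>UNIV - {u}. K i j * sigall s T z' i j)"
      using other by (intro sum.cong) auto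
    ultimately have "K u j * sigall s T z u j = K u j * sigall s T z' u j" using G by linarith
    then show ?thesis using False by simp
  qed
  then have "sigall s T z = sigall s T z'" using sW by (auto simp: fun_eq_iff)
  then show ?thesis using zW by simp
qed

lemma backward:
  assumes d: "is_dtrn a K s T" and ci: "coordinatewise_injective a K" and a: "0 < a" "a < 1"
    and hi: "head_independent K U"
  shows "x \<in> cube \<Longrightarrow> x' \<in> cube \<Longrightarrow> (\<forall>w\<in>UNIV - U. (dtrn_map a K s T ^^ n) x w = (dtrn_map a K s T ^^ n) x' w)
    \<Longrightarrow> itin a K s T x n = itin a K s T x' n
    \<Longrightarrow> (\<forall>k\<le>n. itin a K s T x k = itin a K s T x' k \<and> (\<forall>w\<in>UNIV - U. (dtrn_map a K s T ^^ k) x w = (dtrn_map a K s T ^^ k) x' w))"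
proof (induction n arbitrary: x x')
  case 0 then show ?case by simp
next
  case (Suc n)
  let ?F = "dtrn_map a K s T"
  have c: "?F x \<in> cube" "?F x' \<in> cube" using F_cube[OF d] Suc.prems by auto
  have h1: "\<forall>w\<in>UNIV - U. (?F ^^ n) (?F x) w = (?F ^^ n) (?F x') w"
    using Suc.prems(3) by (simp add: funpow_Suc_right del: funpow.simps)
  have h2: "itin a K s T (?F x) n = itin a K s T (?F x') n" using Suc.prems(4) by (simp add: itin_Suc)
  note IH = Suc.IH[OF c h1 h2]
  have "\<forall>w\<in>UNIV - U. ?F x w = ?F x' w" using IH[rule_format, of 0] by simp
  from one_step[OF d ci a hi Suc.prems(1,2) this]
  have o: "\<forall>w\<in>UNIV - U. x w = x' w" "itin a K s T x 0 = itin a K s T x' 0" by (auto simp: itin_def)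
  show ?case
  proof (intro allI impI)
    fix k assume "k \<le> Suc n"
    then show "itin a K s T x k = itin a K s T x' k \<and> (\<forall>w\<in>UNIV - U. (?F ^^ k) x w = (?F ^^ k) x' w)"
    proof (cases k)
      case 0 then show ?thesis using o by simp
    next
      case (Suc k')
      then have "k' \<le> n" using \<open>k \<le> Suc n\<close> by simp
      then show ?thesis using IH Suc by (simp add: itin_Suc funpow_Suc_right del: funpow.simps)
    qed
  qed
qed

lemma Qpart_ne:
  assumes "is_dtrn a K s T" "t \<ge> 1" "J \<in> Qpart a K s T t"
  shows "J \<noteq> {}"
proof -
  obtain t' where t: "t = Suc t'" using assms(2) by (cases t) auto
  obtain C where C: "C \<in> part a K s T t" and J: "J = (dtrn_map a K s T ^^ t') ` C"
    using assms(3) t by (auto simp: Qpart_def)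
  then show ?thesis using part_char[OF assms(1), of C t'] t by auto
qed

lemma F_one: "dtrn_map 1 K s T = id"
  by (simp add: F_eq fun_eq_iff)

lemma uniq:
  assumes d: "is_dtrn a K s T" and ci: "coordinatewise_injective a K" and hi: "head_independent K U"
    and t1: "t \<ge> 1" and an: "a \<noteq> 0 \<or> t = 1"
    and J: "J \<in> Qpart a K s T t" and J': "J' \<in> Qpart a K s T t"
    and y: "y \<in> J" and y': "y' \<in> J'"
    and yW: "\<forall>w\<in>UNIV - U. y w = y' w" and sy: "sigall s T y = sigall s T y'"
  shows "J = J'"
proof -
  let ?F = "dtrn_map a K s T"
  obtain t' where t: "t = Suc t'" using t1 by (cases t) auto
  obtain C where C: "C \<in> part a K s T t" and JC: "J = (?F ^^ t') ` C"
    using J t by (auto simp: Qpart_def)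
  obtain C' where C': "C' \<in> part a K s T t" and JC': "J' = (?F ^^ t') ` C'"
    using J' t by (auto simp: Qpart_def)
  obtain x where x: "x \<in> C" "y = (?F ^^ t') x" using y JC by auto
  obtain x' where x': "x' \<in> C'" "y' = (?F ^^ t') x'" using y' JC' by auto
  have PC: "C \<noteq> {} \<and> C \<subseteq> cube \<and>
     (\<forall>x\<in>C. \<forall>x'. x' \<in> C \<longleftrightarrow> x' \<in> cube \<and> (\<forall>k<Suc t'. itin a K s T x' k = itin a K s T x k))"
    using part_char[OF d, of C t'] C t by blast
  have PC': "C' \<noteq> {} \<and> C' \<subseteq> cube \<and>
     (\<forall>x\<in>C'. \<forall>x'. x' \<in> C' \<longleftrightarrow> x' \<in> cube \<and> (\<forall>k<Suc t'. itin a K s T x' k = itin a K s T x k))"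
    using part_char[OF d, of C' t'] C' t by blast
  have cx: "x \<in> cube" "x' \<in> cube" using PC PC' x(1) x'(1) by blast+
  have a01: "0 \<le> a" "a \<le> 1" using d by (auto simp: is_dtrn_def)
  have eq: "\<forall>k<Suc t'. itin a K s T x k = itin a K s T x' k"
  proof (cases "t = 1")
    case True then have "t' = 0" using t by simp
    then show ?thesis using x(2) x'(2) sy by (simp add: itin_def)
  next
    case False
    then have "a \<noteq> 0" using an by simp
    show ?thesis
    proof (cases "a = 1")
      case True
      then have "\<And>k. (?F ^^ k) = id" by (simp add: F_one)
      then show ?thesis using x(2) x'(2) sy by (simp add: itin_def)
    next
      case False
      then have a: "0 < a" "a < 1" using a01 \<open>a \<noteq> 0\<close> by auto
      have "\<forall>w\<in>UNIV - U. (?F ^^ t') x w = (?F ^^ t') x' w" using x x' yW by simp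
      moreover have "itin a K s T x t' = itin a K s T x' t'" using x x' sy by (simp add: itin_def)
      ultimately have "\<forall>k\<le>t'. itin a K s T x k = itin a K s T x' k \<and> (\<forall>w\<in>UNIV - U. (?F ^^ k) x w = (?F ^^ k) x' w)"
        by (rule backward[OF d ci a hi cx])
      then show ?thesis by (simp add: less_Suc_eq_le)
    qed
  qed
  have m1: "\<And>z. z \<in> C \<longleftrightarrow> z \<in> cube \<and> (\<forall>k<Suc t'. itin a K s T z k = itin a K s T x k)"
    using PC x(1) by blast
  have m2: "\<And>z. z \<in> C' \<longleftrightarrow> z \<in> cube \<and> (\<forall>k<Suc t'. itin a K s T z k = itin a K s T x' k)"
    using PC' x'(1) by blast
  have "z \<in> C \<longleftrightarrow> z \<in> C'" for z
  proof -
    have "(\<forall>k<Suc t'. itin a K s T z k = itin a K s T x k) \<longleftrightarrow> (\<forall>k<Suc t'. itin a K s T z k = itin a K s T x' k)"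
      using eq by metis
    then show ?thesis unfolding m1 m2 by blast
  qed
  then have "C = C'" by blast
  then show ?thesis using JC JC' by simp
qed

lemma spec_bound:
  fixes K :: "'n::finite \<Rightarrow> 'n \<Rightarrow> real"
  assumes d: "is_dtrn a K s T" and ci: "coordinatewise_injective a K" and hi: "head_independent K U"
    and t1: "t \<ge> 1"
  shows "\<exists>g. spec_cells a K s T (UNIV - U) t S \<subseteq> g ` (Sig01 :: ('n \<Rightarrow> 'n \<Rightarrow> real) set)"
proof (cases "a = 0 \<and> t \<noteq> 1")
  case True
  let ?F = "dtrn_map a K s T"
  obtain t'' where t: "t = Suc (Suc t'')" using True t1 by (cases t; cases "t - 1") auto
  have "spec_cells a K s T (UNIV - U) t S \<subseteq> (\<lambda>\<sigma>. {Gs K \<sigma>}) ` Sig01"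
  proof
    fix J assume "J \<in> spec_cells a K s T (UNIV - U) t S"
    then have J: "J \<in> Qpart a K s T t" by (simp add: spec_cells_def)
    obtain C where C: "C \<in> part a K s T t" and JC: "J = (?F ^^ Suc t'') ` C"
      using J t by (auto simp: Qpart_def)
    have PC: "C \<noteq> {} \<and> C \<subseteq> cube \<and>
       (\<forall>x\<in>C. \<forall>x'. x' \<in> C \<longleftrightarrow> x' \<in> cube \<and> (\<forall>k<Suc (Suc t''). itin a K s T x' k = itin a K s T x k))"
      using part_char[OF d, of C "Suc t''"] C t by blast
    then obtain x0 where x0: "x0 \<in> C" by blast
    have "(?F ^^ Suc t'') x = Gs K (itin a K s T x0 t'')" if x: "x \<in> C" for x
    proof -
      have m: "\<forall>x'. x' \<in> C \<longleftrightarrow> x' \<in> cube \<and> (\<forall>k<Suc (Suc t''). itin a K s T x' k = itin a K s T x0 k)"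
        using PC x0 by blast
      have "\<forall>k<Suc (Suc t''). itin a K s T x k = itin a K s T x0 k" using m x by blast
      then have "itin a K s T x t'' = itin a K s T x0 t''" by simp
      moreover have "(?F ^^ Suc t'') x = Gs K (itin a K s T x t'')"
        using True by (simp add: F_eq itin_def)
      ultimately show ?thesis by simp
    qed
    then have "J = {Gs K (itin a K s T x0 t'')}" using JC x0 by auto
    moreover have "itin a K s T x0 t'' \<in> Sig01" by (simp add: itin_def sigall01)
    ultimately show "J \<in> (\<lambda>\<sigma>. {Gs K \<sigma>}) ` Sig01" by blast
  qed
  then show ?thesis by (rule exI[where x="\<lambda>\<sigma>. {Gs K \<sigma>}"])
next
  case False
  then have an: "a \<noteq> 0 \<or> t = 1" by blast
  show ?thesis
  proof (cases "spec_cells a K s T (UNIV - U) t S = {}")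
    case True then show ?thesis by simp
  next
    case False
    then obtain J0 where J0: "J0 \<in> spec_cells a K s T (UNIV - U) t S" by blast
    then have J0Q: "J0 \<in> Qpart a K s T t" by (simp add: spec_cells_def)
    obtain y0 where y0: "y0 \<in> J0" using Qpart_ne[OF d t1 J0Q] by blast
    define P where "P = (\<lambda>\<sigma> J. J \<in> Qpart a K s T t \<and> (\<exists>y\<in>J. (\<forall>i\<in>UNIV - U. y i = y0 i) \<and> sigall s T y = \<sigma>))"
    define g where "g = (\<lambda>\<sigma>. SOME J. P \<sigma> J)"
    have "spec_cells a K s T (UNIV - U) t S \<subseteq> g ` Sig01"
    proof
      fix J assume JS: "J \<in> spec_cells a K s T (UNIV - U) t S"
      then have JQ: "J \<in> Qpart a K s T t" and pr: "\<forall>i\<in>UNIV - U. proj i J = S i"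
        by (auto simp: spec_cells_def)
      have pr0: "\<forall>i\<in>UNIV - U. proj i J0 = S i" using J0 by (simp add: spec_cells_def)
      obtain z where z: "z \<in> J" using Qpart_ne[OF d t1 JQ] by blast
      define f where "f = (\<lambda>i. if i \<in> UNIV - U then y0 i else z i)"
      have "f i \<in> proj i J" for i
      proof (cases "i \<in> UNIV - U")
        case True
        then have "f i = y0 i" by (simp add: f_def)
        moreover have "y0 i \<in> proj i J0" using y0 by (simp add: proj_def)
        ultimately show ?thesis using pr pr0 True by simp
      next
        case False
        then show ?thesis using z by (simp add: f_def proj_def)
      qed
      then have fJ: "f \<in> J"
        using mix_product[of J f] Qpart_ne[OF d t1 JQ] Qpart_mix[OF d t1 JQ] by blast
      have fW: "\<forall>i\<in>UNIV - U. f i = y0 i" by (simp add: f_def)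
      have PJ: "P (sigall s T f) J" unfolding P_def using JQ fJ fW by blast
      then have Pg: "P (sigall s T f) (g (sigall s T f))" unfolding g_def by (rule someI)
      then obtain y where gQ: "g (sigall s T f) \<in> Qpart a K s T t" and y: "y \<in> g (sigall s T f)"
        and yW: "\<forall>i\<in>UNIV - U. y i = y0 i" and sy: "sigall s T y = sigall s T f"
        unfolding P_def by blast
      have "g (sigall s T f) = J"
        by (rule uniq[OF d ci hi t1 an gQ JQ y fJ]) (use yW fW sy in auto)
      then show "J \<in> g ` Sig01" using sigall01 by (metis imageI)
    qed
    then show ?thesis by (rule exI[where x=g])
  qed
qed

theorem mainTheorem9:
  fixes a :: real and K :: "'n::finite \<Rightarrow> 'n \<Rightarrow> real"
    and s :: "'n \<Rightarrow> 'n \<Rightarrow> int" and T :: "'n \<Rightarrow> 'n \<Rightarrow> real" and U :: "'n set"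
  assumes "is_dtrn a K s T"
    and "coordinatewise_injective a K"
    and "head_independent K U"
  shows "essential a K s T (UNIV - U)"
proof -
  have "\<forall>t\<ge>1. \<forall>S. is_spec a K s T (UNIV - U) t S \<longrightarrow>
        finite (spec_cells a K s T (UNIV - U) t S) \<and> card (spec_cells a K s T (UNIV - U) t S) \<le> card (Sig01 :: ('n \<Rightarrow> 'n \<Rightarrow> real) set)"
  proof (intro allI impI)
    fix t :: nat and S assume t1: "t \<ge> 1" and "is_spec a K s T (UNIV - U) t S"
    from spec_bound[OF assms t1, of S]
    obtain g where g: "spec_cells a K s T (UNIV - U) t S \<subseteq> g ` (Sig01 :: ('n \<Rightarrow> 'n \<Rightarrow> real) set)"
      by (elim exE)
    have fin: "finite (g ` (Sig01 :: ('n \<Rightarrow> 'n \<Rightarrow> real) set))" by (rule finite_imageI[OF finite_Sig01])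
    have "card (spec_cells a K s T (UNIV - U) t S) \<le> card (g ` (Sig01 :: ('n \<Rightarrow> 'n \<Rightarrow> real) set))"
      by (rule card_mono[OF fin g])
    also have "\<dots> \<le> card (Sig01 :: ('n \<Rightarrow> 'n \<Rightarrow> real) set)" by (rule card_image_le[OF finite_Sig01])
    finally show "finite (spec_cells a K s T (UNIV - U) t S) \<and>
        card (spec_cells a K s T (UNIV - U) t S) \<le> card (Sig01 :: ('n \<Rightarrow> 'n \<Rightarrow> real) set)"
      using finite_subset[OF g fin] by simp
  qed
  then show ?thesis unfolding essential_def by blast
qed

end
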